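(* Let $Z_0,Z_1$ be i.i.d. ${\mathsf N}(0,1)$, independent of $(W,U)\sim\mu_{W,U}$, and let $h:\mathbb{R}^2\to\mathbb{R}$ be continuous. For any fixed $\omega_0> 0$, the function $$a\mapsto\frac1{a^2}\mathbb{E}\big[\mathbb{E}[Z_0\mid h(aZ_0+(\omega_0^2-a^2)^{1/2}Z_1,W),U,Z_1]^2\big]$$ is non-increasing in $a\in(0,\omega_0]$.
   Context: $\mu_{W,U}$ is a probability distribution on $\mathbb{R}^2$. *)

theory Defs
  imports "HOL-Probability.Probability"
begin

definition cond_sigma ::
  "'a measure \<Rightarrow> (real \<times> real \<Rightarrow> real) \<Rightarrow> ('a \<Rightarrow> real) \<Rightarrow> ('a \<Rightarrow> real)
     \<Rightarrow> ('a \<Rightarrow> real \<times> real) \<Rightarrow> real \<Rightarrow> real \<Rightarrow> 'a measure" where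
  "cond_sigma M h Z0 Z1 WU w0 a =
     vimage_algebra (space M)
       (\<lambda>x. (h (a * Z0 x + sqrt (w0\<^sup>2 - a\<^sup>2) * Z1 x, fst (WU x)), snd (WU x), Z1 x))
       (borel :: (real \<times> real \<times> real) measure)"

definition lemma12_fun ::
  "'a measure \<Rightarrow> (real \<times> real \<Rightarrow> real) \<Rightarrow> ('a \<Rightarrow> real) \<Rightarrow> ('a \<Rightarrow> real)
     \<Rightarrow> ('a \<Rightarrow> real \<times> real) \<Rightarrow> real \<Rightarrow> real \<Rightarrow> real" where
  "lemma12_fun M h Z0 Z1 WU w0 a =
     (1 / a\<^sup>2) * (\<integral>x. (real_cond_exp M (cond_sigma M h Z0 Z1 WU w0 a) Z0 x)\<^sup>2 \<partial>M)"

end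

theory Submission
  imports Defs
begin


lemma sfs_vimage:
  assumes "prob_space M" "V \<in> measurable M S"
  shows "sigma_finite_subalgebra M (vimage_algebra (space M) V S)"
proof -
  interpret prob_space M by fact
  have "subalgebra M (vimage_algebra (space M) V S)"
    unfolding subalgebra_def using sets_image_in_sets[OF refl assms(2)] by simp
  then interpret finite_measure_subalgebra M "vimage_algebra (space M) V S"
    by unfold_locales
  show ?thesis by unfold_locales
qed

lemma cond_exp_transfer:
  assumes M: "prob_space M" and T[measurable]: "T \<in> measurable M S"
    and f[measurable]: "f \<in> borel_measurable S" and fi: "integrable (distr M S T) f"
    and v[measurable]: "v \<in> measurable S K"
  shows "AE x in M. real_cond_exp M (vimage_algebra (space M) (\<lambda>x. v (T x)) K) (\<lambda>x. f (T x)) x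
          = real_cond_exp (distr M S T) (vimage_algebra (space S) v K) f (T x)"
proof -
  let ?L = "distr M S T"
  let ?FM = "vimage_algebra (space M) (\<lambda>x. v (T x)) K"
  let ?FL = "vimage_algebra (space S) v K"
  have pL: "prob_space ?L" using M by (simp add: prob_space.prob_space_distr)
  interpret FM: sigma_finite_subalgebra M ?FM by (rule sfs_vimage[OF M]) measurable
  interpret FL: sigma_finite_subalgebra ?L ?FL
    using sfs_vimage[OF pL, of v K] by simp
  let ?g = "real_cond_exp ?L ?FL f"
  have gL: "?g \<in> borel_measurable ?FL" by simp
  have Tm: "T \<in> measurable ?FM ?FL"
    apply (rule measurable_vimage_algebra2)
    using measurable_space[OF T] apply simp
    apply (rule measurable_vimage_algebra1)
    using measurable_space[OF T] measurable_space[OF v] by auto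
  have gm: "(\<lambda>x. ?g (T x)) \<in> borel_measurable ?FM"
    using measurable_comp[OF Tm gL] by (simp add: comp_def)
  have fiM: "integrable M (\<lambda>x. f (T x))" using fi integrable_distr_eq[OF T f] by simp
  have giL: "integrable ?L ?g" by (rule FL.real_cond_exp_int(1)[OF fi])
  have giM: "integrable M (\<lambda>x. ?g (T x))"
    using giL integrable_distr_eq[OF T, of ?g] by simp
  show ?thesis
  proof (rule FM.real_cond_exp_charact[OF _ fiM giM gm])
    fix A assume A: "A \<in> sets ?FM"
    then obtain C where C: "C \<in> sets K" and AC: "A = (\<lambda>x. v (T x)) -` C \<inter> space M"
      using sets_vimage_algebra2[of "\<lambda>x. v (T x)" "space M" K] measurable_space[OF measurable_compose[OF T v]]
      by auto
    let ?B = "v -` C \<inter> space S"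
    have B: "?B \<in> sets ?FL" by (rule in_vimage_algebra[OF C])
    have [measurable]: "C \<in> sets K" by fact
    have ind: "indicator A x = indicator C (v (T x))" if "x \<in> space M" for x :: 'a
      using that AC by (auto simp: indicator_def)
    have ind2: "indicator ?B y = indicator C (v y)" if "y \<in> space S" for y
      using that by (auto simp: indicator_def)
    have "(\<integral>x\<in>A. f (T x) \<partial>M) = (\<integral>x. indicator C (v (T x)) * f (T x) \<partial>M)"
      unfolding set_lebesgue_integral_def by (intro Bochner_Integration.integral_cong) (auto simp: ind real_scaleR_def)
    also have "\<dots> = (\<integral>y. indicator C (v y) * f y \<partial>?L)"
      by (subst integral_distr) auto
    also have "\<dots> = (\<integral>y\<in>?B. f y \<partial>?L)"
      unfolding set_lebesgue_integral_def by (intro Bochner_Integration.integral_cong) (auto simp: ind2 real_scaleR_def)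
    also have "\<dots> = (\<integral>y\<in>?B. ?g y \<partial>?L)"
      by (rule FL.real_cond_exp_intA[OF fi B])
    also have "\<dots> = (\<integral>y. indicator C (v y) * ?g y \<partial>?L)"
      unfolding set_lebesgue_integral_def by (intro Bochner_Integration.integral_cong) (auto simp: ind2 real_scaleR_def)
    also have "\<dots> = (\<integral>x. indicator C (v (T x)) * ?g (T x) \<partial>M)"
      by (subst integral_distr) auto
    also have "\<dots> = (\<integral>x\<in>A. ?g (T x) \<partial>M)"
      unfolding set_lebesgue_integral_def by (intro Bochner_Integration.integral_cong) (auto simp: ind real_scaleR_def)
    finally show "(\<integral>x\<in>A. f (T x) \<partial>M) = (\<integral>x\<in>A. ?g (T x) \<partial>M)" .
  qed
qed

lemma cond_exp_transfer_sq:
  assumes M: "prob_space M" and T[measurable]: "T \<in> measurable M S"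
    and f[measurable]: "f \<in> borel_measurable S" and fi: "integrable (distr M S T) f"
    and v[measurable]: "v \<in> measurable S K"
  shows "(\<integral>x. (real_cond_exp M (vimage_algebra (space M) (\<lambda>x. v (T x)) K) (\<lambda>x. f (T x)) x)\<^sup>2 \<partial>M)
       = (\<integral>y. (real_cond_exp (distr M S T) (vimage_algebra (space S) v K) f y)\<^sup>2 \<partial>distr M S T)"
proof -
  have "(\<integral>x. (real_cond_exp M (vimage_algebra (space M) (\<lambda>x. v (T x)) K) (\<lambda>x. f (T x)) x)\<^sup>2 \<partial>M)
     = (\<integral>x. (real_cond_exp (distr M S T) (vimage_algebra (space S) v K) f (T x))\<^sup>2 \<partial>M)"
    by (rule integral_cong_AE) (use cond_exp_transfer[OF assms] in auto)
  also have "\<dots> = (\<integral>y. (real_cond_exp (distr M S T) (vimage_algebra (space S) v K) f y)\<^sup>2 \<partial>distr M S T)"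
    by (subst integral_distr) auto
  finally show ?thesis .
qed



lemma distr_pair_snd':
  assumes N: "prob_space N" and K: "sigma_finite_measure K"
  shows "distr (N \<Otimes>\<^sub>M K) K snd = K"
proof (intro measure_eqI)
  interpret N: prob_space N by fact
  interpret K: sigma_finite_measure K by fact
  interpret pair_sigma_finite N K by unfold_locales
  fix A assume A: "A \<in> sets (distr (N \<Otimes>\<^sub>M K) K snd)"
  then have AK: "A \<in> sets K" by simp
  from A have "emeasure (distr (N \<Otimes>\<^sub>M K) K snd) A = emeasure (N \<Otimes>\<^sub>M K) (space N \<times> A)"
    by (auto simp add: emeasure_distr space_pair_measure dest: sets.sets_into_space intro!: arg_cong2[where f=emeasure])
  also have "\<dots> = emeasure N (space N) * emeasure K A"
    by (rule K.emeasure_pair_measure_Times) (use AK in auto)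
  finally show "emeasure (distr (N \<Otimes>\<^sub>M K) K snd) A = emeasure K A"
    by (simp add: N.emeasure_space_1)
qed simp

lemma (in sigma_finite_subalgebra) cond_exp_sq:
  assumes X[measurable]: "integrable M X" and X2: "integrable M (\<lambda>x. (X x)\<^sup>2)"
  shows "integrable M (\<lambda>x. (real_cond_exp M F X x)\<^sup>2)"
    "(\<integral>x. (real_cond_exp M F X x)\<^sup>2 \<partial>M) \<le> (\<integral>x. (X x)\<^sup>2 \<partial>M)"
proof -
  have J: "AE x in M. (real_cond_exp M F X x)\<^sup>2 \<le> real_cond_exp M F (\<lambda>x. (X x)\<^sup>2) x"
    by (rule real_cond_exp_jensens_inequality(2)[where q="\<lambda>x. x\<^sup>2" and I=UNIV and a=0 and b=0])
      (auto intro: X X2 convex_power2)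
  have m: "(\<lambda>x. (real_cond_exp M F X x)\<^sup>2) \<in> borel_measurable M" by measurable
  have i2: "integrable M (real_cond_exp M F (\<lambda>x. (X x)\<^sup>2))" by (rule real_cond_exp_int(1)[OF X2])
  show i1: "integrable M (\<lambda>x. (real_cond_exp M F X x)\<^sup>2)"
    by (rule Bochner_Integration.integrable_bound[OF i2 m]) (use J in auto)
  have "(\<integral>x. (real_cond_exp M F X x)\<^sup>2 \<partial>M) \<le> (\<integral>x. real_cond_exp M F (\<lambda>x. (X x)\<^sup>2) x \<partial>M)"
    by (rule integral_mono_AE[OF i1 i2 J])
  also have "\<dots> = (\<integral>x. (X x)\<^sup>2 \<partial>M)" by (rule real_cond_exp_int(2)[OF X2])
  finally show "(\<integral>x. (real_cond_exp M F X x)\<^sup>2 \<partial>M) \<le> (\<integral>x. (X x)\<^sup>2 \<partial>M)" .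
qed

lemma cond_exp_indep_extra:
  assumes N: "prob_space N" and K: "prob_space K"
    and f[measurable]: "f \<in> borel_measurable K" and fi: "integrable K f"
    and v[measurable]: "v \<in> measurable K S"
  shows "AE \<omega> in N \<Otimes>\<^sub>M K. real_cond_exp (N \<Otimes>\<^sub>M K)
            (vimage_algebra (space (N \<Otimes>\<^sub>M K)) (\<lambda>\<omega>. (fst \<omega>, v (snd \<omega>))) (N \<Otimes>\<^sub>M S)) (\<lambda>\<omega>. f (snd \<omega>)) \<omega>
          = real_cond_exp K (vimage_algebra (space K) v S) f (snd \<omega>)"
proof -
  interpret N: prob_space N by fact
  interpret K: prob_space K by fact
  interpret pair_prob_space N K by unfold_locales
  let ?P = "N \<Otimes>\<^sub>M K"
  let ?W = "\<lambda>\<omega>. (fst \<omega>, v (snd \<omega>))"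
  let ?FP = "vimage_algebra (space ?P) ?W (N \<Otimes>\<^sub>M S)"
  let ?FK = "vimage_algebra (space K) v S"
  have Wm[measurable]: "?W \<in> measurable ?P (N \<Otimes>\<^sub>M S)" by measurable
  interpret FP: sigma_finite_subalgebra ?P ?FP by (rule sfs_vimage[OF prob_space_axioms Wm])
  interpret FK: sigma_finite_subalgebra K ?FK by (rule sfs_vimage[OF K v])
  let ?g = "real_cond_exp K ?FK f"
  have gK: "?g \<in> borel_measurable ?FK" by simp
  have W1: "?W \<in> measurable ?FP (N \<Otimes>\<^sub>M S)"
    by (rule measurable_vimage_algebra1) (use measurable_space[OF Wm] in auto)
  have sndm: "snd \<in> measurable ?FP ?FK"
    apply (rule measurable_vimage_algebra2)
    apply (auto simp: space_pair_measure)[1]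
    using measurable_compose[OF W1 measurable_snd] by simp
  have gm: "(\<lambda>\<omega>. ?g (snd \<omega>)) \<in> borel_measurable ?FP"
    using measurable_comp[OF sndm gK] by (simp add: comp_def)
  have dsnd: "distr ?P K snd = K"
    by (rule distr_pair_snd'[OF N]) (rule K.sigma_finite_measure_axioms)
  have fiP: "integrable ?P (\<lambda>\<omega>. f (snd \<omega>))"
    using fi integrable_distr_eq[OF measurable_snd f, of N] dsnd by simp
  have giK: "integrable K ?g" by (rule FK.real_cond_exp_int(1)[OF fi])
  have gKm[measurable]: "?g \<in> borel_measurable K" by simp
  have giP: "integrable ?P (\<lambda>\<omega>. ?g (snd \<omega>))"
    using giK integrable_distr_eq[OF measurable_snd gKm, of N] dsnd by simp
  show ?thesis
  proof (rule FP.real_cond_exp_charact[OF _ fiP giP gm])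
    fix A assume A: "A \<in> sets ?FP"
    then obtain C where C[measurable]: "C \<in> sets (N \<Otimes>\<^sub>M S)" and AC: "A = ?W -` C \<inter> space ?P"
      using sets_vimage_algebra2[of ?W "space ?P" "N \<Otimes>\<^sub>M S"] measurable_space[OF Wm]
      by auto
    have ind: "indicator A \<omega> = indicator C (fst \<omega>, v (snd \<omega>))" if "\<omega> \<in> space ?P" for \<omega>
      using that AC by (auto simp: indicator_def)
    have key: "(\<integral>k. indicator C (x, v k) * f k \<partial>K) = (\<integral>k. indicator C (x, v k) * ?g k \<partial>K)"
      if x: "x \<in> space N" for x
    proof -
      let ?B = "v -` (Pair x -` C) \<inter> space K"
      have PC: "Pair x -` C \<in> sets S" using sets_Pair1[OF C] .
      have B: "?B \<in> sets ?FK" by (rule in_vimage_algebra[OF PC])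
      have i: "indicator ?B k = indicator C (x, v k)" if "k \<in> space K" for k
        using that by (auto simp: indicator_def)
      have "(\<integral>k. indicator C (x, v k) * f k \<partial>K) = (\<integral>k\<in>?B. f k \<partial>K)"
        unfolding set_lebesgue_integral_def by (intro Bochner_Integration.integral_cong) (auto simp: i real_scaleR_def)
      also have "\<dots> = (\<integral>k\<in>?B. ?g k \<partial>K)" by (rule FK.real_cond_exp_intA[OF fi B])
      also have "\<dots> = (\<integral>k. indicator C (x, v k) * ?g k \<partial>K)"
        unfolding set_lebesgue_integral_def by (intro Bochner_Integration.integral_cong) (auto simp: i real_scaleR_def)
      finally show ?thesis .
    qed
    have int1: "integrable ?P (\<lambda>\<omega>. indicator C (fst \<omega>, v (snd \<omega>)) * f (snd \<omega>))"
      by (rule Bochner_Integration.integrable_bound[OF fiP]) (auto simp: indicator_def)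
    have int2: "integrable ?P (\<lambda>\<omega>. indicator C (fst \<omega>, v (snd \<omega>)) * ?g (snd \<omega>))"
      by (rule Bochner_Integration.integrable_bound[OF giP]) (auto simp: indicator_def)
    have "(\<integral>\<omega>\<in>A. f (snd \<omega>) \<partial>?P) = (\<integral>\<omega>. indicator C (fst \<omega>, v (snd \<omega>)) * f (snd \<omega>) \<partial>?P)"
      unfolding set_lebesgue_integral_def by (intro Bochner_Integration.integral_cong) (auto simp: ind real_scaleR_def)
    also have "\<dots> = (\<integral>x. (\<integral>k. indicator C (x, v k) * f k \<partial>K) \<partial>N)"
      using integral_fst'[OF int1] by simp
    also have "\<dots> = (\<integral>x. (\<integral>k. indicator C (x, v k) * ?g k \<partial>K) \<partial>N)"
      by (rule Bochner_Integration.integral_cong[OF refl]) (simp add: key)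
    also have "\<dots> = (\<integral>\<omega>. indicator C (fst \<omega>, v (snd \<omega>)) * ?g (snd \<omega>) \<partial>?P)"
      using integral_fst'[OF int2] by simp
    also have "\<dots> = (\<integral>\<omega>\<in>A. ?g (snd \<omega>) \<partial>?P)"
      unfolding set_lebesgue_integral_def by (intro Bochner_Integration.integral_cong) (auto simp: ind real_scaleR_def)
    finally show "(\<integral>\<omega>\<in>A. f (snd \<omega>) \<partial>?P) = (\<integral>\<omega>\<in>A. ?g (snd \<omega>) \<partial>?P)" .
  qed
qed



lemma leb_linear:
  fixes F :: "real \<times> real \<Rightarrow> ennreal" and a b c d :: real
  assumes F[measurable]: "F \<in> borel_measurable borel" and d: "d \<noteq> 0" and det: "\<bar>a*d - b*c\<bar> = 1"
  shows "(\<integral>\<^sup>+x. \<integral>\<^sup>+y. F (a*x+b*y, c*x+d*y) \<partial>lborel \<partial>lborel) = (\<integral>\<^sup>+x. \<integral>\<^sup>+y. F (x, y) \<partial>lborel \<partial>lborel)"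
proof -
  define e where "e = (a*d-b*c)/d"
  have e0: "e \<noteq> 0" using det d by (auto simp: e_def)
  have ae: "\<bar>e\<bar> = 1/\<bar>d\<bar>" using det d by (simp add: e_def abs_divide)
  have inner: "(\<integral>\<^sup>+y. F (a*x+b*y, c*x+d*y) \<partial>lborel) = ennreal (1/\<bar>d\<bar>) * (\<integral>\<^sup>+w. F (e*x + (b/d)*w, w) \<partial>lborel)" for x
  proof -
    have "(\<integral>\<^sup>+w. F (e*x + (b/d)*w, w) \<partial>lborel) = ennreal \<bar>d\<bar> * (\<integral>\<^sup>+y. F (e*x + (b/d)*(c*x + d*y), c*x + d*y) \<partial>lborel)"
      by (rule nn_integral_real_affine[OF _ d]) measurable
    also have "(\<lambda>y. F (e*x + (b/d)*(c*x + d*y), c*x + d*y)) = (\<lambda>y. F (a*x+b*y, c*x+d*y))"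
      using d by (auto simp: e_def field_simps intro!: ext arg_cong[where f=F])
    finally have "(\<integral>\<^sup>+w. F (e*x + (b/d)*w, w) \<partial>lborel) = ennreal \<bar>d\<bar> * (\<integral>\<^sup>+y. F (a*x+b*y, c*x+d*y) \<partial>lborel)" .
    then have "ennreal (1/\<bar>d\<bar>) * (\<integral>\<^sup>+w. F (e*x + (b/d)*w, w) \<partial>lborel) = ennreal (1/\<bar>d\<bar>) * ennreal \<bar>d\<bar> * (\<integral>\<^sup>+y. F (a*x+b*y, c*x+d*y) \<partial>lborel)"
      by (simp add: mult.assoc)
    also have "ennreal (1/\<bar>d\<bar>) * ennreal \<bar>d\<bar> = 1"
      using d by (simp add: ennreal_mult[symmetric])
    finally show ?thesis by simp
  qed
  have inner2: "(\<integral>\<^sup>+x. F (e*x + (b/d)*w, w) \<partial>lborel) = ennreal \<bar>d\<bar> * (\<integral>\<^sup>+u. F (u, w) \<partial>lborel)" for w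
  proof -
    have "(\<integral>\<^sup>+u. F (u, w) \<partial>lborel) = ennreal \<bar>e\<bar> * (\<integral>\<^sup>+x. F ((b/d)*w + e*x, w) \<partial>lborel)"
      by (rule nn_integral_real_affine[OF _ e0]) measurable
    then have "ennreal \<bar>d\<bar> * (\<integral>\<^sup>+u. F (u, w) \<partial>lborel) = ennreal \<bar>d\<bar> * ennreal \<bar>e\<bar> * (\<integral>\<^sup>+x. F ((b/d)*w + e*x, w) \<partial>lborel)"
      by (simp add: mult.assoc)
    also have "ennreal \<bar>d\<bar> * ennreal \<bar>e\<bar> = 1"
      using d ae by (simp add: ennreal_mult[symmetric])
    finally show ?thesis by (simp add: add.commute)
  qed
  have "(\<integral>\<^sup>+x. \<integral>\<^sup>+y. F (a*x+b*y, c*x+d*y) \<partial>lborel \<partial>lborel)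
      = (\<integral>\<^sup>+x. ennreal (1/\<bar>d\<bar>) * (\<integral>\<^sup>+w. F (e*x + (b/d)*w, w) \<partial>lborel) \<partial>lborel)"
    by (rule nn_integral_cong) (rule inner)
  also have "\<dots> = ennreal (1/\<bar>d\<bar>) * (\<integral>\<^sup>+x. \<integral>\<^sup>+w. F (e*x + (b/d)*w, w) \<partial>lborel \<partial>lborel)"
    by (rule nn_integral_cmult) measurable
  also have "(\<integral>\<^sup>+x. \<integral>\<^sup>+w. F (e*x + (b/d)*w, w) \<partial>lborel \<partial>lborel) = (\<integral>\<^sup>+w. \<integral>\<^sup>+x. F (e*x + (b/d)*w, w) \<partial>lborel \<partial>lborel)"
    by (rule lborel_pair.Fubini'[symmetric]) measurable
  also have "\<dots> = (\<integral>\<^sup>+w. ennreal \<bar>d\<bar> * (\<integral>\<^sup>+u. F (u, w) \<partial>lborel) \<partial>lborel)"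
    by (rule nn_integral_cong) (rule inner2)
  also have "\<dots> = ennreal \<bar>d\<bar> * (\<integral>\<^sup>+w. \<integral>\<^sup>+u. F (u, w) \<partial>lborel \<partial>lborel)"
    by (rule nn_integral_cmult) measurable
  also have "(\<integral>\<^sup>+w. \<integral>\<^sup>+u. F (u, w) \<partial>lborel \<partial>lborel) = (\<integral>\<^sup>+u. \<integral>\<^sup>+w. F (u, w) \<partial>lborel \<partial>lborel)"
    by (rule lborel_pair.Fubini') measurable
  also have "ennreal (1/\<bar>d\<bar>) * (ennreal \<bar>d\<bar> * (\<integral>\<^sup>+u. \<integral>\<^sup>+w. F (u, w) \<partial>lborel \<partial>lborel)) = (\<integral>\<^sup>+u. \<integral>\<^sup>+w. F (u, w) \<partial>lborel \<partial>lborel)"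
    using d by (simp add: mult.assoc[symmetric] ennreal_mult[symmetric])
  finally show ?thesis .
qed



lemma std_normal_prod_rot:
  fixes a b c d x y :: real
  assumes o1: "a\<^sup>2 + c\<^sup>2 = 1" and o2: "b\<^sup>2 + d\<^sup>2 = 1" and o3: "a*b + c*d = 0"
  shows "std_normal_density (a*x+b*y) * std_normal_density (c*x+d*y) = std_normal_density x * std_normal_density y"
proof -
  have q: "(a*x+b*y)\<^sup>2 + (c*x+d*y)\<^sup>2 = (a\<^sup>2 + c\<^sup>2)*x\<^sup>2 + 2*(a*b+c*d)*x*y + (b\<^sup>2 + d\<^sup>2)*y\<^sup>2"
    by (simp add: power2_eq_square algebra_simps)
  have q2: "(a*x+b*y)\<^sup>2 + (c*x+d*y)\<^sup>2 = x\<^sup>2 + y\<^sup>2" using q o1 o2 o3 by simp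
  have "std_normal_density (a*x+b*y) * std_normal_density (c*x+d*y)
      = (1 / sqrt (2 * pi)) * (1 / sqrt (2 * pi)) * exp (- ((a*x+b*y)\<^sup>2 + (c*x+d*y)\<^sup>2) / 2)"
    by (simp add: std_normal_density_def exp_add[symmetric] field_simps)
  also have "\<dots> = (1 / sqrt (2 * pi)) * (1 / sqrt (2 * pi)) * exp (- (x\<^sup>2 + y\<^sup>2) / 2)"
    by (simp only: q2)
  also have "\<dots> = std_normal_density x * std_normal_density y"
    by (simp add: std_normal_density_def exp_add[symmetric] field_simps)
  finally show ?thesis .
qed

lemma fst_borel[measurable]: "(fst :: 'a::second_countable_topology \<times> 'b::second_countable_topology \<Rightarrow> 'a) \<in> borel_measurable borel"
  by (subst borel_prod[symmetric]) simp

lemma snd_borel[measurable]: "(snd :: 'a::second_countable_topology \<times> 'b::second_countable_topology \<Rightarrow> 'b) \<in> borel_measurable borel"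
  by (subst borel_prod[symmetric]) simp

lemma prob_N: "prob_space std_normal_distribution"
  by (rule prob_space_normal_density) simp

lemma sets_N[simp]: "sets std_normal_distribution = sets borel"
  by simp

lemma space_N[simp]: "space std_normal_distribution = UNIV"
  by simp

lemma sets_bN: "sets (borel \<Otimes>\<^sub>M std_normal_distribution) = sets (borel :: ('a::second_countable_topology \<times> real) measure)"
  by (metis borel_prod sets_density sets_lborel sets_pair_measure_cong)

lemma nn_N_meas[measurable (raw)]:
  fixes H :: "'a::second_countable_topology \<Rightarrow> real \<Rightarrow> ennreal"
  assumes "case_prod H \<in> borel_measurable borel"
  shows "(\<lambda>x. \<integral>\<^sup>+y. H x y \<partial>std_normal_distribution) \<in> borel_measurable borel"
proof -
  interpret N: prob_space std_normal_distribution by (rule prob_N)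
  show ?thesis
    apply (rule N.borel_measurable_nn_integral)
    apply (subst measurable_cong_sets[OF sets_bN refl])
    by (rule assms)
qed

lemma rot_gauss:
  fixes F :: "real \<times> real \<Rightarrow> ennreal" and a b c d :: real
  assumes F[measurable]: "F \<in> borel_measurable borel"
    and o1: "a\<^sup>2 + c\<^sup>2 = 1" and o2: "b\<^sup>2 + d\<^sup>2 = 1" and o3: "a*b + c*d = 0" and d: "d \<noteq> 0"
  shows "(\<integral>\<^sup>+x. \<integral>\<^sup>+y. F (a*x+b*y, c*x+d*y) \<partial>std_normal_distribution \<partial>std_normal_distribution)
       = (\<integral>\<^sup>+x. \<integral>\<^sup>+y. F (x, y) \<partial>std_normal_distribution \<partial>std_normal_distribution)"
proof -
  let ?N = std_normal_distribution
  let ?p = "\<lambda>x. ennreal (std_normal_density x)"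
  define G where "G = (\<lambda>z::real\<times>real. ?p (fst z) * ?p (snd z) * F z)"
  have Gm[measurable]: "G \<in> borel_measurable borel" unfolding G_def by measurable
  have det: "\<bar>a*d - b*c\<bar> = 1"
  proof -
    have "(a*d - b*c)\<^sup>2 = (a\<^sup>2 + c\<^sup>2)*(b\<^sup>2 + d\<^sup>2) - (a*b + c*d)\<^sup>2"
      by (simp add: power2_eq_square algebra_simps)
    then have "(a*d - b*c)\<^sup>2 = 1" using o1 o2 o3 by simp
    then show ?thesis by (auto simp: power2_eq_1_iff)
  qed
  have E: "(\<integral>\<^sup>+x. \<integral>\<^sup>+y. H x y \<partial>?N \<partial>?N) = (\<integral>\<^sup>+x. \<integral>\<^sup>+y. ?p x * ?p y * H x y \<partial>lborel \<partial>lborel)"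
    if [measurable]: "case_prod H \<in> borel_measurable borel" for H :: "real \<Rightarrow> real \<Rightarrow> ennreal"
  proof -
    have Hx[measurable]: "H x \<in> borel_measurable borel" for x
    proof -
      have "(\<lambda>y. case_prod H (x, y)) \<in> borel_measurable borel" by measurable
      then show ?thesis by simp
    qed
    have "(\<integral>\<^sup>+x. \<integral>\<^sup>+y. H x y \<partial>?N \<partial>?N) = (\<integral>\<^sup>+x. ?p x * (\<integral>\<^sup>+y. H x y \<partial>?N) \<partial>lborel)"
      by (subst nn_integral_density) auto
    also have "\<dots> = (\<integral>\<^sup>+x. ?p x * (\<integral>\<^sup>+y. ?p y * H x y \<partial>lborel) \<partial>lborel)"
      by (subst nn_integral_density) auto
    also have "\<dots> = (\<integral>\<^sup>+x. (\<integral>\<^sup>+y. ?p x * (?p y * H x y) \<partial>lborel) \<partial>lborel)"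
      by (rule nn_integral_cong, rule nn_integral_cmult[symmetric]) measurable
    finally show ?thesis by (simp add: mult.assoc)
  qed
  have "(\<integral>\<^sup>+x. \<integral>\<^sup>+y. F (a*x+b*y, c*x+d*y) \<partial>?N \<partial>?N)
      = (\<integral>\<^sup>+x. \<integral>\<^sup>+y. ?p x * ?p y * F (a*x+b*y, c*x+d*y) \<partial>lborel \<partial>lborel)"
    by (rule E) measurable
  also have "\<dots> = (\<integral>\<^sup>+x. \<integral>\<^sup>+y. G (a*x+b*y, c*x+d*y) \<partial>lborel \<partial>lborel)"
    unfolding G_def
    by (intro nn_integral_cong)
       (simp add: ennreal_mult'[symmetric] std_normal_prod_rot[OF o1 o2 o3])
  also have "\<dots> = (\<integral>\<^sup>+x. \<integral>\<^sup>+y. G (x, y) \<partial>lborel \<partial>lborel)"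
    by (rule leb_linear[OF Gm d det])
  also have "\<dots> = (\<integral>\<^sup>+x. \<integral>\<^sup>+y. F (x, y) \<partial>?N \<partial>?N)"
    unfolding G_def by (subst E) (simp_all add: F)
  finally show ?thesis .
qed



lemma sets_NN: "sets (std_normal_distribution \<Otimes>\<^sub>M std_normal_distribution) = sets (borel :: (real\<times>real) measure)"
  by (metis borel_prod sets_density sets_lborel sets_pair_measure_cong)

lemma fubN:
  fixes f :: "real \<Rightarrow> real \<Rightarrow> ennreal"
  assumes "case_prod f \<in> borel_measurable borel"
  shows "(\<integral>\<^sup>+y. \<integral>\<^sup>+x. f x y \<partial>std_normal_distribution \<partial>std_normal_distribution)
       = (\<integral>\<^sup>+x. \<integral>\<^sup>+y. f x y \<partial>std_normal_distribution \<partial>std_normal_distribution)"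
proof -
  interpret N: prob_space std_normal_distribution by (rule prob_N)
  interpret NN: pair_sigma_finite std_normal_distribution std_normal_distribution ..
  show ?thesis
    apply (rule NN.Fubini')
    apply (subst measurable_cong_sets[OF sets_NN refl])
    by (rule assms)
qed

lemma triple_rev:
  fixes G :: "real \<times> real \<times> real \<Rightarrow> ennreal"
  assumes G[measurable]: "G \<in> borel_measurable borel"
  shows "(\<integral>\<^sup>+z. \<integral>\<^sup>+q. \<integral>\<^sup>+x. G (x, q, z) \<partial>std_normal_distribution \<partial>std_normal_distribution \<partial>std_normal_distribution)
       = (\<integral>\<^sup>+x. \<integral>\<^sup>+q. \<integral>\<^sup>+z. G (x, q, z) \<partial>std_normal_distribution \<partial>std_normal_distribution \<partial>std_normal_distribution)"
proof -
  let ?N = std_normal_distribution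
  have "(\<integral>\<^sup>+z. \<integral>\<^sup>+q. \<integral>\<^sup>+x. G (x, q, z) \<partial>?N \<partial>?N \<partial>?N) = (\<integral>\<^sup>+z. \<integral>\<^sup>+x. \<integral>\<^sup>+q. G (x, q, z) \<partial>?N \<partial>?N \<partial>?N)"
    by (rule nn_integral_cong, rule fubN) measurable
  also have "\<dots> = (\<integral>\<^sup>+x. \<integral>\<^sup>+z. \<integral>\<^sup>+q. G (x, q, z) \<partial>?N \<partial>?N \<partial>?N)"
    by (rule fubN) measurable
  also have "\<dots> = (\<integral>\<^sup>+x. \<integral>\<^sup>+q. \<integral>\<^sup>+z. G (x, q, z) \<partial>?N \<partial>?N \<partial>?N)"
    by (rule nn_integral_cong, rule fubN) measurable
  finally show ?thesis .
qed

lemma triple_rot: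
  fixes H :: "real \<times> real \<times> real \<Rightarrow> ennreal" and \<rho> \<sigma> \<alpha> \<beta> :: real
  assumes H[measurable]: "H \<in> borel_measurable borel"
    and r1: "\<rho>\<^sup>2 + \<sigma>\<^sup>2 = 1" and r2: "\<alpha>\<^sup>2 + \<beta>\<^sup>2 = 1" and s0: "\<sigma> \<noteq> 0" and a0: "\<alpha> \<noteq> 0"
  shows "(\<integral>\<^sup>+p. \<integral>\<^sup>+q. \<integral>\<^sup>+r. H (-\<beta>*q + \<alpha>*(\<rho>*p - \<sigma>*r), \<alpha>*q + \<beta>*(\<rho>*p - \<sigma>*r), \<sigma>*p + \<rho>*r)
            \<partial>std_normal_distribution \<partial>std_normal_distribution \<partial>std_normal_distribution)
       = (\<integral>\<^sup>+p. \<integral>\<^sup>+q. \<integral>\<^sup>+r. H (p, q, r) \<partial>std_normal_distribution \<partial>std_normal_distribution \<partial>std_normal_distribution)"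
proof -
  let ?N = std_normal_distribution
  have "(\<integral>\<^sup>+p. \<integral>\<^sup>+q. \<integral>\<^sup>+r. H (-\<beta>*q + \<alpha>*(\<rho>*p - \<sigma>*r), \<alpha>*q + \<beta>*(\<rho>*p - \<sigma>*r), \<sigma>*p + \<rho>*r) \<partial>?N \<partial>?N \<partial>?N)
      = (\<integral>\<^sup>+q. \<integral>\<^sup>+p. \<integral>\<^sup>+r. H (-\<beta>*q + \<alpha>*(\<rho>*p - \<sigma>*r), \<alpha>*q + \<beta>*(\<rho>*p - \<sigma>*r), \<sigma>*p + \<rho>*r) \<partial>?N \<partial>?N \<partial>?N)"
    by (rule fubN) measurable
  also have "\<dots> = (\<integral>\<^sup>+q. \<integral>\<^sup>+p. \<integral>\<^sup>+r. H (-\<beta>*q + \<alpha>*r, \<alpha>*q + \<beta>*r, p) \<partial>?N \<partial>?N \<partial>?N)"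
  proof (rule nn_integral_cong)
    fix q
    have "(\<integral>\<^sup>+p. \<integral>\<^sup>+r. (\<lambda>z. H (-\<beta>*q + \<alpha>* snd z, \<alpha>*q + \<beta>* snd z, fst z)) (\<sigma>*p + \<rho>*r, \<rho>*p + (-\<sigma>)*r) \<partial>?N \<partial>?N)
        = (\<integral>\<^sup>+p. \<integral>\<^sup>+r. (\<lambda>z. H (-\<beta>*q + \<alpha>* snd z, \<alpha>*q + \<beta>* snd z, fst z)) (p, r) \<partial>?N \<partial>?N)"
      by (rule rot_gauss) (use r1 s0 in \<open>auto simp: algebra_simps\<close>)
    then show "(\<integral>\<^sup>+p. \<integral>\<^sup>+r. H (-\<beta>*q + \<alpha>*(\<rho>*p - \<sigma>*r), \<alpha>*q + \<beta>*(\<rho>*p - \<sigma>*r), \<sigma>*p + \<rho>*r) \<partial>?N \<partial>?N)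
        = (\<integral>\<^sup>+p. \<integral>\<^sup>+r. H (-\<beta>*q + \<alpha>*r, \<alpha>*q + \<beta>*r, p) \<partial>?N \<partial>?N)"
      by simp
  qed
  also have "\<dots> = (\<integral>\<^sup>+p. \<integral>\<^sup>+q. \<integral>\<^sup>+r. H (-\<beta>*q + \<alpha>*r, \<alpha>*q + \<beta>*r, p) \<partial>?N \<partial>?N \<partial>?N)"
    by (rule fubN) measurable
  also have "\<dots> = (\<integral>\<^sup>+p. \<integral>\<^sup>+q. \<integral>\<^sup>+r. H (r, q, p) \<partial>?N \<partial>?N \<partial>?N)"
  proof (rule nn_integral_cong)
    fix p
    have "(\<integral>\<^sup>+q. \<integral>\<^sup>+r. (\<lambda>z. H (snd z, fst z, p)) (\<alpha>*q + \<beta>*r, (-\<beta>)*q + \<alpha>*r) \<partial>?N \<partial>?N)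
        = (\<integral>\<^sup>+q. \<integral>\<^sup>+r. (\<lambda>z. H (snd z, fst z, p)) (q, r) \<partial>?N \<partial>?N)"
      by (rule rot_gauss) (use r2 a0 in \<open>auto simp: algebra_simps\<close>)
    then show "(\<integral>\<^sup>+q. \<integral>\<^sup>+r. H (-\<beta>*q + \<alpha>*r, \<alpha>*q + \<beta>*r, p) \<partial>?N \<partial>?N)
        = (\<integral>\<^sup>+q. \<integral>\<^sup>+r. H (r, q, p) \<partial>?N \<partial>?N)"
      by simp
  qed
  also have "\<dots> = (\<integral>\<^sup>+p. \<integral>\<^sup>+q. \<integral>\<^sup>+r. H (p, q, r) \<partial>?N \<partial>?N \<partial>?N)"
    by (rule triple_rev) measurable
  finally show ?thesis .
qed



abbreviation SN :: "real measure" where "SN \<equiv> std_normal_distribution"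

declare sets_N[measurable_cong]

lemma integrable_pair_fst:
  fixes f :: "'a \<Rightarrow> real"
  assumes "sigma_finite_measure M1" "prob_space M2" "f \<in> borel_measurable M1" "integrable M1 f"
  shows "integrable (M1 \<Otimes>\<^sub>M M2) (\<lambda>x. f (fst x))"
proof -
  interpret M2: prob_space M2 by fact
  have "distr (M1 \<Otimes>\<^sub>M M2) M1 fst = M1" by (rule M2.distr_pair_fst)
  then show ?thesis using integrable_distr_eq[of fst "M1 \<Otimes>\<^sub>M M2" M1 f] assms(3,4) by simp
qed

lemma integrable_pair_snd:
  fixes f :: "'b \<Rightarrow> real"
  assumes "prob_space M1" "sigma_finite_measure M2" "f \<in> borel_measurable M2" "integrable M2 f"
  shows "integrable (M1 \<Otimes>\<^sub>M M2) (\<lambda>x. f (snd x))"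
proof -
  have "distr (M1 \<Otimes>\<^sub>M M2) M2 snd = M2" by (rule distr_pair_snd'[OF assms(1,2)])
  then show ?thesis using integrable_distr_eq[of snd "M1 \<Otimes>\<^sub>M M2" M2 f] assms(3,4) by simp
qed

lemma iterP:
  fixes mu :: "(real \<times> real) measure"
  assumes mu: "prob_space mu" and G[measurable]: "G \<in> borel_measurable (SN \<Otimes>\<^sub>M ((SN \<Otimes>\<^sub>M SN) \<Otimes>\<^sub>M mu))"
  shows "integral\<^sup>N (SN \<Otimes>\<^sub>M ((SN \<Otimes>\<^sub>M SN) \<Otimes>\<^sub>M mu)) G
       = (\<integral>\<^sup>+p. \<integral>\<^sup>+q. \<integral>\<^sup>+r. \<integral>\<^sup>+wu. G (p, ((q, r), wu)) \<partial>mu \<partial>SN \<partial>SN \<partial>SN)"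
proof -
  interpret mu: prob_space mu by fact
  interpret N: prob_space SN by (rule prob_N)
  interpret NN: pair_prob_space SN SN ..
  interpret K: pair_prob_space "SN \<Otimes>\<^sub>M SN" mu ..
  have "integral\<^sup>N (SN \<Otimes>\<^sub>M ((SN \<Otimes>\<^sub>M SN) \<Otimes>\<^sub>M mu)) G = (\<integral>\<^sup>+p. \<integral>\<^sup>+k. G (p, k) \<partial>((SN \<Otimes>\<^sub>M SN) \<Otimes>\<^sub>M mu) \<partial>SN)"
    by (rule K.nn_integral_fst[symmetric]) measurable
  also have "\<dots> = (\<integral>\<^sup>+p. \<integral>\<^sup>+qr. \<integral>\<^sup>+wu. G (p, (qr, wu)) \<partial>mu \<partial>(SN \<Otimes>\<^sub>M SN) \<partial>SN)"
    by (rule nn_integral_cong, rule mu.nn_integral_fst[symmetric]) measurable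
  also have "\<dots> = (\<integral>\<^sup>+p. \<integral>\<^sup>+q. \<integral>\<^sup>+r. \<integral>\<^sup>+wu. G (p, ((q, r), wu)) \<partial>mu \<partial>SN \<partial>SN \<partial>SN)"
    by (rule nn_integral_cong, rule N.nn_integral_fst[symmetric, where f="\<lambda>qr. \<integral>\<^sup>+wu. G (_, (qr, wu)) \<partial>mu", simplified]) measurable
  finally show ?thesis .
qed

definition Tb :: "real \<Rightarrow> real \<Rightarrow> real \<Rightarrow> real \<Rightarrow> real \<times> (real \<times> real) \<times> (real \<times> real)
    \<Rightarrow> real \<times> (real \<times> real) \<times> (real \<times> real)" where
  "Tb \<rho> \<sigma> \<alpha> \<beta> \<omega> = (-\<beta> * fst (fst (snd \<omega>)) + \<alpha> * (\<rho> * fst \<omega> - \<sigma> * snd (fst (snd \<omega>))),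
      ((\<alpha> * fst (fst (snd \<omega>)) + \<beta> * (\<rho> * fst \<omega> - \<sigma> * snd (fst (snd \<omega>))), \<sigma> * fst \<omega> + \<rho> * snd (fst (snd \<omega>))),
       snd (snd \<omega>)))"

lemma Tb_meas[measurable]:
  "Tb \<rho> \<sigma> \<alpha> \<beta> \<in> measurable (SN \<Otimes>\<^sub>M ((SN \<Otimes>\<^sub>M SN) \<Otimes>\<^sub>M mu)) (SN \<Otimes>\<^sub>M ((SN \<Otimes>\<^sub>M SN) \<Otimes>\<^sub>M mu))"
  unfolding Tb_def by measurable

lemma law_Tb:
  fixes mu :: "(real \<times> real) measure"
  assumes mu: "prob_space mu"
    and r1: "\<rho>\<^sup>2 + \<sigma>\<^sup>2 = 1" and r2: "\<alpha>\<^sup>2 + \<beta>\<^sup>2 = 1" and s0: "\<sigma> \<noteq> 0" and a0: "\<alpha> \<noteq> 0"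
  shows "distr (SN \<Otimes>\<^sub>M ((SN \<Otimes>\<^sub>M SN) \<Otimes>\<^sub>M mu)) (SN \<Otimes>\<^sub>M ((SN \<Otimes>\<^sub>M SN) \<Otimes>\<^sub>M mu)) (Tb \<rho> \<sigma> \<alpha> \<beta>)
       = SN \<Otimes>\<^sub>M ((SN \<Otimes>\<^sub>M SN) \<Otimes>\<^sub>M mu)" (is "distr ?P ?P ?T = ?P")
proof (rule measure_eqI)
  interpret mu: prob_space mu by fact
  show "sets (distr ?P ?P ?T) = sets ?P" by simp
  fix A assume "A \<in> sets (distr ?P ?P ?T)"
  then have A[measurable]: "A \<in> sets ?P" by simp
  define H where "H = (\<lambda>t::real\<times>real\<times>real. \<integral>\<^sup>+wu. indicator A (fst t, ((fst (snd t), snd (snd t)), wu)) \<partial>mu)"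
  have Hm': "H \<in> borel_measurable (SN \<Otimes>\<^sub>M (SN \<Otimes>\<^sub>M SN))"
    unfolding H_def by measurable
  have s3: "sets (SN \<Otimes>\<^sub>M (SN \<Otimes>\<^sub>M SN)) = sets (borel :: (real \<times> real \<times> real) measure)"
    by (metis borel_prod sets_N sets_pair_measure_cong)
  have Hm: "H \<in> borel_measurable borel"
    using Hm' unfolding measurable_cong_sets[OF s3 refl] .
  have "emeasure (distr ?P ?P ?T) A = (\<integral>\<^sup>+\<omega>. indicator A \<omega> \<partial>distr ?P ?P ?T)"
    by (rule nn_integral_indicator[symmetric]) (simp only: sets_distr A)
  also have "\<dots> = (\<integral>\<^sup>+\<omega>. indicator A (?T \<omega>) \<partial>?P)"
    by (rule nn_integral_distr) measurable
  also have "\<dots> = (\<integral>\<^sup>+p. \<integral>\<^sup>+q. \<integral>\<^sup>+r. \<integral>\<^sup>+wu. indicator A (?T (p, ((q, r), wu))) \<partial>mu \<partial>SN \<partial>SN \<partial>SN)"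
    by (rule iterP[OF mu]) measurable
  also have "\<dots> = (\<integral>\<^sup>+p. \<integral>\<^sup>+q. \<integral>\<^sup>+r. H (-\<beta>*q + \<alpha>*(\<rho>*p - \<sigma>*r), \<alpha>*q + \<beta>*(\<rho>*p - \<sigma>*r), \<sigma>*p + \<rho>*r) \<partial>SN \<partial>SN \<partial>SN)"
    by (simp add: H_def Tb_def)
  also have "\<dots> = (\<integral>\<^sup>+p. \<integral>\<^sup>+q. \<integral>\<^sup>+r. H (p, q, r) \<partial>SN \<partial>SN \<partial>SN)"
    by (rule triple_rot[OF Hm r1 r2 s0 a0])
  also have "\<dots> = (\<integral>\<^sup>+p. \<integral>\<^sup>+q. \<integral>\<^sup>+r. \<integral>\<^sup>+wu. indicator A (p, ((q, r), wu)) \<partial>mu \<partial>SN \<partial>SN \<partial>SN)"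
    by (simp add: H_def)
  also have "\<dots> = (\<integral>\<^sup>+\<omega>. indicator A \<omega> \<partial>?P)"
    by (rule iterP[OF mu, symmetric]) measurable
  also have "\<dots> = emeasure ?P A" by (rule nn_integral_indicator) (rule A)
  finally show "emeasure (distr ?P ?P ?T) A = emeasure ?P A" .
qed



lemma law_M:
  fixes M :: "'a measure" and Z0 Z1 :: "'a \<Rightarrow> real" and WU :: "'a \<Rightarrow> real \<times> real"
    and mu :: "(real \<times> real) measure"
  assumes "prob_space M"
    and D0: "distributed M lborel Z0 std_normal_density"
    and D1: "distributed M lborel Z1 std_normal_density"
    and I1: "prob_space.indep_var M borel Z0 borel Z1"
    and WU: "WU \<in> borel_measurable M"
    and smu: "sets mu = sets borel"
    and dmu: "distr M borel WU = mu"
    and I2: "prob_space.indep_var M borel (\<lambda>x. (Z0 x, Z1 x)) borel WU"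
  shows "distr M ((SN \<Otimes>\<^sub>M SN) \<Otimes>\<^sub>M mu) (\<lambda>x. ((Z0 x, Z1 x), WU x)) = (SN \<Otimes>\<^sub>M SN) \<Otimes>\<^sub>M mu"
proof -
  interpret prob_space M by fact
  have d0: "distr M borel Z0 = SN"
  proof -
    have "distr M borel Z0 = distr M lborel Z0" by (rule distr_cong) auto
    also have "\<dots> = SN" by (rule distributed_distr_eq_density[OF D0])
    finally show ?thesis .
  qed
  have d1: "distr M borel Z1 = SN"
  proof -
    have "distr M borel Z1 = distr M lborel Z1" by (rule distr_cong) auto
    also have "\<dots> = SN" by (rule distributed_distr_eq_density[OF D1])
    finally show ?thesis .
  qed
  have e1: "SN \<Otimes>\<^sub>M SN = distr M (borel \<Otimes>\<^sub>M borel) (\<lambda>x. (Z0 x, Z1 x))"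
    using I1 unfolding indep_var_distribution_eq d0 d1 by simp
  have e1': "distr M borel (\<lambda>x. (Z0 x, Z1 x)) = SN \<Otimes>\<^sub>M SN"
    using e1 by (simp add: borel_prod)
  have e2: "distr M borel (\<lambda>x. (Z0 x, Z1 x)) \<Otimes>\<^sub>M distr M borel WU = distr M (borel \<Otimes>\<^sub>M borel) (\<lambda>x. ((Z0 x, Z1 x), WU x))"
    using I2 unfolding indep_var_distribution_eq by simp
  have s: "sets ((SN \<Otimes>\<^sub>M SN) \<Otimes>\<^sub>M mu) = sets (borel \<Otimes>\<^sub>M borel :: ((real \<times> real) \<times> (real \<times> real)) measure)"
    by (rule sets_pair_measure_cong) (simp_all only: smu sets_NN)
  have "distr M ((SN \<Otimes>\<^sub>M SN) \<Otimes>\<^sub>M mu) (\<lambda>x. ((Z0 x, Z1 x), WU x)) = distr M (borel \<Otimes>\<^sub>M borel) (\<lambda>x. ((Z0 x, Z1 x), WU x))"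
    by (rule distr_cong[OF refl s]) simp
  also have "\<dots> = (SN \<Otimes>\<^sub>M SN) \<Otimes>\<^sub>M mu"
    using e2 e1' dmu by simp
  finally show ?thesis .
qed



lemma key_P:
  fixes mu :: "(real \<times> real) measure" and h :: "real \<times> real \<Rightarrow> real" and w0 a b :: real
  assumes mu: "prob_space mu" and smu: "sets mu = sets borel" and hm[measurable]: "h \<in> borel_measurable borel"
    and a: "0 < a" and ab: "a < b" and bw: "b \<le> w0"
  defines "K \<equiv> (SN \<Otimes>\<^sub>M SN) \<Otimes>\<^sub>M mu"
    and "v \<equiv> \<lambda>t (k::(real\<times>real)\<times>(real\<times>real)). (h (t * fst (fst k) + sqrt (w0\<^sup>2 - t\<^sup>2) * snd (fst k), fst (snd k)), snd (snd k), snd (fst k))"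
  shows "(1/b\<^sup>2) * (\<integral>y. (real_cond_exp K (vimage_algebra (space K) (v b) borel) (\<lambda>k. fst (fst k)) y)\<^sup>2 \<partial>K)
       \<le> (1/a\<^sup>2) * (\<integral>y. (real_cond_exp K (vimage_algebra (space K) (v a) borel) (\<lambda>k. fst (fst k)) y)\<^sup>2 \<partial>K)"
proof -
  interpret mu: prob_space mu by fact
  interpret N: prob_space SN by (rule prob_N)
  interpret NN: pair_prob_space SN SN ..
  interpret KK0: pair_prob_space "SN \<Otimes>\<^sub>M SN" mu ..
  have pK: "prob_space K" unfolding K_def by (rule KK0.prob_space_axioms)
  interpret KK: prob_space K by (rule pK)
  interpret PP0: pair_prob_space SN K ..
  let ?P = "SN \<Otimes>\<^sub>M K"
  have pP: "prob_space ?P" by (rule PP0.prob_space_axioms)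
  have [measurable_cong]: "sets mu = sets borel" by (rule smu)
  have vm[measurable]: "v t \<in> measurable K borel" for t
    unfolding v_def K_def by measurable
  have Km: "sets K = sets ((SN \<Otimes>\<^sub>M SN) \<Otimes>\<^sub>M mu)" unfolding K_def ..
  define ca where "ca = sqrt (w0\<^sup>2 - a\<^sup>2)"
  define cb where "cb = sqrt (w0\<^sup>2 - b\<^sup>2)"
  define s where "s = sqrt (b\<^sup>2 - a\<^sup>2)"
  have ab2: "a\<^sup>2 < b\<^sup>2" using a ab by (simp add: power_strict_mono)
  have bw2: "b\<^sup>2 \<le> w0\<^sup>2" using a ab bw by (simp add: power_mono)
  have ca2: "ca\<^sup>2 = w0\<^sup>2 - a\<^sup>2" unfolding ca_def using ab2 bw2 by simp
  have cb2: "cb\<^sup>2 = w0\<^sup>2 - b\<^sup>2" unfolding cb_def using bw2 by simp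
  have s2: "s\<^sup>2 = b\<^sup>2 - a\<^sup>2" unfolding s_def using ab2 by simp
  have ca0: "ca > 0" unfolding ca_def using ab2 bw2 by simp
  have s0: "s > 0" unfolding s_def using ab2 by simp
  have b0: "b > 0" using a ab by simp
  define \<rho> where "\<rho> = cb / ca"
  define \<sigma> where "\<sigma> = s / ca"
  define \<alpha> where "\<alpha> = a / b"
  define \<beta> where "\<beta> = - s / b"
  have r1: "\<rho>\<^sup>2 + \<sigma>\<^sup>2 = 1"
    unfolding \<rho>_def \<sigma>_def using ca0 ca2 cb2 s2 by (simp add: power_divide field_simps)
  have r2: "\<alpha>\<^sup>2 + \<beta>\<^sup>2 = 1"
    unfolding \<alpha>_def \<beta>_def using b0 s2 by (simp add: power_divide field_simps)
  have \<sigma>0: "\<sigma> \<noteq> 0" unfolding \<sigma>_def using s0 ca0 by simp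
  have \<alpha>0: "\<alpha> \<noteq> 0" unfolding \<alpha>_def using a b0 by simp
  let ?T = "Tb \<rho> \<sigma> \<alpha> \<beta>"
  have Tm[measurable]: "?T \<in> measurable ?P ?P" unfolding K_def by measurable
  have LT: "distr ?P ?P ?T = ?P"
    unfolding K_def by (rule law_Tb[OF mu r1 r2 \<sigma>0 \<alpha>0])
  have dsnd: "distr ?P K snd = K"
    by (rule distr_pair_snd'[OF prob_N]) (rule KK.sigma_finite_measure_axioms)

  
  have iN1: "integrable SN (\<lambda>x::real. x)"
    using integrable_std_normal_distribution_moment[of 1] by simp
  have iN2: "integrable SN (\<lambda>x::real. x\<^sup>2)"
    using integrable_std_normal_distribution_moment[of 2] by simp
  have iNN1: "integrable (SN \<Otimes>\<^sub>M SN) (\<lambda>z. fst z)"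
    by (rule integrable_pair_fst[OF N.sigma_finite_measure_axioms prob_N _ iN1]) simp
  have iNN2: "integrable (SN \<Otimes>\<^sub>M SN) (\<lambda>z. (fst z)\<^sup>2)"
    by (rule integrable_pair_fst[OF N.sigma_finite_measure_axioms prob_N _ iN2]) simp
  have iK1: "integrable K (\<lambda>k. fst (fst k))"
    unfolding K_def by (rule integrable_pair_fst[OF NN.sigma_finite_measure_axioms mu _ iNN1]) simp
  have iK2: "integrable K (\<lambda>k. (fst (fst k))\<^sup>2)"
    unfolding K_def by (rule integrable_pair_fst[OF NN.sigma_finite_measure_axioms mu _ iNN2]) simp
  have fKm[measurable]: "(\<lambda>k. fst (fst k)) \<in> borel_measurable K" unfolding K_def by measurable
  have iX0: "integrable ?P (\<lambda>\<omega>. fst (fst (snd \<omega>)))"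
    by (rule integrable_pair_snd[OF prob_N KK.sigma_finite_measure_axioms fKm iK1])
  have iX02: "integrable ?P (\<lambda>\<omega>. (fst (fst (snd \<omega>)))\<^sup>2)"
    by (rule integrable_pair_snd[OF prob_N KK.sigma_finite_measure_axioms _ iK2]) measurable
  have iP1: "integrable ?P (\<lambda>\<omega>. fst \<omega>)"
    by (rule integrable_pair_fst[OF N.sigma_finite_measure_axioms pK _ iN1]) simp
  have ixi: "integrable ?P (\<lambda>\<omega>. fst (?T \<omega>))"
    using integrable_distr_eq[of ?T ?P ?P fst] iP1 LT by simp
  have ig0: "integrable ?P (\<lambda>\<omega>. fst (fst (snd (?T \<omega>))))"
    using integrable_distr_eq[of ?T ?P ?P "\<lambda>\<omega>. fst (fst (snd \<omega>))"] iX0 LT by simp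

  
  let ?G = "vimage_algebra (space ?P) (\<lambda>\<omega>. (fst \<omega>, v a (snd \<omega>))) (SN \<Otimes>\<^sub>M borel)"
  let ?EK = "\<lambda>t. real_cond_exp K (vimage_algebra (space K) (v t) borel) (\<lambda>k. fst (fst k))"
  have QA: "(\<integral>y. (?EK a y)\<^sup>2 \<partial>K) = (\<integral>\<omega>. (real_cond_exp ?P ?G (\<lambda>\<omega>. fst (fst (snd \<omega>))) \<omega>)\<^sup>2 \<partial>?P)"
  proof -
    have ae: "AE \<omega> in ?P. real_cond_exp ?P ?G (\<lambda>\<omega>. fst (fst (snd \<omega>))) \<omega> = ?EK a (snd \<omega>)"
      by (rule cond_exp_indep_extra[OF prob_N pK fKm iK1 vm])
    have "(\<integral>\<omega>. (real_cond_exp ?P ?G (\<lambda>\<omega>. fst (fst (snd \<omega>))) \<omega>)\<^sup>2 \<partial>?P) = (\<integral>\<omega>. (?EK a (snd \<omega>))\<^sup>2 \<partial>?P)"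
      by (rule integral_cong_AE) (use ae in auto)
    also have "\<dots> = (\<integral>y. (?EK a y)\<^sup>2 \<partial>distr ?P K snd)"
      by (subst integral_distr) auto
    finally show ?thesis using dsnd by simp
  qed

  
  let ?Fb = "vimage_algebra (space ?P) (\<lambda>\<omega>. v b (snd (?T \<omega>))) borel"
  have QB: "(\<integral>y. (?EK b y)\<^sup>2 \<partial>K) = (\<integral>\<omega>. (real_cond_exp ?P ?Fb (\<lambda>\<omega>. fst (fst (snd (?T \<omega>)))) \<omega>)\<^sup>2 \<partial>?P)"
  proof -
    have "(\<integral>\<omega>. (real_cond_exp ?P (vimage_algebra (space ?P) (\<lambda>\<omega>. v b (snd \<omega>)) borel) (\<lambda>\<omega>. fst (fst (snd \<omega>))) \<omega>)\<^sup>2 \<partial>?P)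
        = (\<integral>y. (real_cond_exp (distr ?P K snd) (vimage_algebra (space K) (v b) borel) (\<lambda>k. fst (fst k)) y)\<^sup>2 \<partial>distr ?P K snd)"
      by (rule cond_exp_transfer_sq[OF pP measurable_snd fKm _ vm]) (simp add: dsnd iK1)
    then have 1: "(\<integral>\<omega>. (real_cond_exp ?P (vimage_algebra (space ?P) (\<lambda>\<omega>. v b (snd \<omega>)) borel) (\<lambda>\<omega>. fst (fst (snd \<omega>))) \<omega>)\<^sup>2 \<partial>?P)
        = (\<integral>y. (?EK b y)\<^sup>2 \<partial>K)" by (simp only: dsnd)
    have "(\<integral>\<omega>. (real_cond_exp ?P ?Fb (\<lambda>\<omega>. fst (fst (snd (?T \<omega>)))) \<omega>)\<^sup>2 \<partial>?P)
        = (\<integral>\<omega>. (real_cond_exp (distr ?P ?P ?T) (vimage_algebra (space ?P) (\<lambda>\<omega>. v b (snd \<omega>)) borel) (\<lambda>\<omega>. fst (fst (snd \<omega>))) \<omega>)\<^sup>2 \<partial>distr ?P ?P ?T)"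
      by (rule cond_exp_transfer_sq[OF pP Tm _ _, where f="\<lambda>\<omega>. fst (fst (snd \<omega>))" and v="\<lambda>\<omega>. v b (snd \<omega>)" and K=borel])
         (simp_all add: LT iX0)
    then have 2: "(\<integral>\<omega>. (real_cond_exp ?P ?Fb (\<lambda>\<omega>. fst (fst (snd (?T \<omega>)))) \<omega>)\<^sup>2 \<partial>?P)
        = (\<integral>\<omega>. (real_cond_exp ?P (vimage_algebra (space ?P) (\<lambda>\<omega>. v b (snd \<omega>)) borel) (\<lambda>\<omega>. fst (fst (snd \<omega>))) \<omega>)\<^sup>2 \<partial>?P)"
      by (simp only: LT)
    show ?thesis using 1 2 by simp
  qed

  
  have Wm[measurable]: "(\<lambda>\<omega>. (fst \<omega>, v a (snd \<omega>))) \<in> measurable ?P (SN \<Otimes>\<^sub>M borel)" by measurable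
  have Vbm[measurable]: "(\<lambda>\<omega>. v b (snd (?T \<omega>))) \<in> measurable ?P borel" by measurable
  interpret GG: sigma_finite_subalgebra ?P ?G by (rule sfs_vimage[OF pP Wm])
  interpret FB: sigma_finite_subalgebra ?P ?Fb by (rule sfs_vimage[OF pP Vbm])
  have idh: "b * (\<alpha> * q + \<beta> * (\<rho> * p - \<sigma> * r)) + cb * (\<sigma> * p + \<rho> * r) = a * q + ca * r" for p q r
  proof -
    have e1: "b * \<alpha> = a" "b * \<beta> = - s" unfolding \<alpha>_def \<beta>_def using b0 by auto
    have e2: "- s * \<rho> + cb * \<sigma> = 0" unfolding \<rho>_def \<sigma>_def by (simp add: field_simps)
    have e3: "s * \<sigma> + cb * \<rho> = ca" unfolding \<rho>_def \<sigma>_def using ca0 ca2 cb2 s2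
      by (simp add: field_simps power2_eq_square)
    have "b * (\<alpha> * q + \<beta> * (\<rho> * p - \<sigma> * r)) + cb * (\<sigma> * p + \<rho> * r)
        = (b * \<alpha>) * q + ((b * \<beta>) * \<rho> + cb * \<sigma>) * p + ((b * \<beta>) * (- \<sigma>) + cb * \<rho>) * r"
      by (simp add: algebra_simps)
    also have "\<dots> = a * q + ca * r" using e1 e2 e3 by simp
    finally show ?thesis .
  qed
  have vbT: "v b (snd (?T \<omega>)) = (fst (v a (snd \<omega>)), fst (snd (v a (snd \<omega>))), \<sigma> * fst \<omega> + \<rho> * snd (snd (v a (snd \<omega>))))" for \<omega>
    unfolding v_def Tb_def using idh by (simp add: ca_def[symmetric] cb_def[symmetric])
  have subGF: "subalgebra ?G ?Fb"
  proof -
    have W1: "(\<lambda>\<omega>. (fst \<omega>, v a (snd \<omega>))) \<in> measurable ?G (SN \<Otimes>\<^sub>M borel)"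
      by (rule measurable_vimage_algebra1) (use measurable_space[OF Wm] in auto)
    have phi: "(\<lambda>z::real \<times> real \<times> real \<times> real. (fst (snd z), fst (snd (snd z)), \<sigma> * fst z + \<rho> * snd (snd (snd z))))
        \<in> measurable (SN \<Otimes>\<^sub>M borel) borel" by measurable
    have "(\<lambda>\<omega>. v b (snd (?T \<omega>))) \<in> measurable ?G borel"
      using measurable_compose[OF W1 phi] by (simp add: vbT)
    then have "sets ?Fb \<subseteq> sets ?G" by (intro sets_image_in_sets) auto
    then show ?thesis unfolding subalgebra_def by simp
  qed
  have subPG: "subalgebra ?P ?G" by (rule GG.subalg)
  
  have xi0: "AE \<omega> in ?P. real_cond_exp ?P ?Fb (\<lambda>\<omega>. fst (?T \<omega>)) \<omega> = 0"
  proof (rule FB.real_cond_exp_charact[OF _ ixi])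
    show "integrable ?P (\<lambda>_. 0::real)" by simp
    show "(\<lambda>_. 0::real) \<in> borel_measurable ?Fb" by simp
    fix A assume A: "A \<in> sets ?Fb"
    then obtain C where C[measurable]: "C \<in> sets (borel :: (real \<times> real \<times> real) measure)"
      and AC: "A = (\<lambda>\<omega>. v b (snd (?T \<omega>))) -` C \<inter> space ?P"
      using sets_vimage_algebra2[of "\<lambda>\<omega>. v b (snd (?T \<omega>))" "space ?P" borel] by auto
    have ind: "indicator A \<omega> = indicator C (v b (snd (?T \<omega>)))" if "\<omega> \<in> space ?P" for \<omega>
      using that AC by (auto simp: indicator_def)
    have iC: "integrable ?P (\<lambda>\<omega>. indicator C (v b (snd \<omega>)) * fst \<omega>)"
      by (rule Bochner_Integration.integrable_bound[OF iP1]) (auto simp: indicator_def)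
    have inner: "(\<integral>k. indicator C (v b k) * p \<partial>K) = (\<integral>k. indicator C (v b k) \<partial>K) * p" for p :: real
      by (rule integral_mult_left_zero)
    have m0: "(\<integral>p. p \<partial>SN) = 0"
      using integral_std_normal_distribution_moment_odd[of 1] by simp
    have "(\<integral>\<omega>\<in>A. fst (?T \<omega>) \<partial>?P) = (\<integral>\<omega>. indicator C (v b (snd (?T \<omega>))) * fst (?T \<omega>) \<partial>?P)"
      unfolding set_lebesgue_integral_def
      by (intro Bochner_Integration.integral_cong) (auto simp: ind real_scaleR_def)
    also have "\<dots> = (\<integral>\<omega>. indicator C (v b (snd \<omega>)) * fst \<omega> \<partial>distr ?P ?P ?T)"
      by (subst integral_distr) auto
    also have "\<dots> = (\<integral>\<omega>. indicator C (v b (snd \<omega>)) * fst \<omega> \<partial>?P)" by (simp only: LT)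
    also have "\<dots> = (\<integral>p. (\<integral>k. indicator C (v b k) * p \<partial>K) \<partial>SN)"
      using PP0.integral_fst'[OF iC] by simp
    also have "\<dots> = (\<integral>p. (\<integral>k. indicator C (v b k) \<partial>K) * p \<partial>SN)"
      by (simp only: inner)
    also have "\<dots> = (\<integral>k. indicator C (v b k) \<partial>K) * (\<integral>p. p \<partial>SN)"
      by (rule integral_mult_right_zero)
    also have "\<dots> = 0" by (simp add: m0)
    finally show "(\<integral>\<omega>\<in>A. fst (?T \<omega>) \<partial>?P) = (\<integral>\<omega>\<in>A. 0 \<partial>?P)" by simp
  qed

  let ?X0 = "\<lambda>\<omega>. fst (fst (snd \<omega>))"
  let ?xi = "\<lambda>\<omega>. fst (?T \<omega>)"
  let ?g0 = "\<lambda>\<omega>. fst (fst (snd (?T \<omega>)))"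
  have g0eq: "?g0 = (\<lambda>\<omega>. (b/a) * ?X0 \<omega> - (s/a) * ?xi \<omega>)"
  proof
    fix \<omega> :: "real \<times> (real \<times> real) \<times> (real \<times> real)"
    have hb: "b * b = a * a + s * s" using s2 by (simp add: power2_eq_square)
    have hb3: "b * (b * b) = a * (a * b) + b * (s * s)" by (subst hb) (simp add: algebra_simps)
    have "b/a - s/a * (- \<beta>) = \<alpha>" unfolding \<alpha>_def \<beta>_def using a b0 hb3
      by (simp add: field_simps power2_eq_square)
    moreover have "- (s/a) * \<alpha> = \<beta>" unfolding \<alpha>_def \<beta>_def using a b0 by (simp add: field_simps)
    moreover have "(b/a) * q - (s/a) * (-\<beta> * q + \<alpha> * e) = (b/a - s/a * (-\<beta>)) * q + (- (s/a) * \<alpha>) * e" for q e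
      by (simp add: algebra_simps)
    ultimately have key: "(b/a) * q - (s/a) * (-\<beta> * q + \<alpha> * e) = \<alpha> * q + \<beta> * e" for q e
      by simp
    show "?g0 \<omega> = (b/a) * ?X0 \<omega> - (s/a) * ?xi \<omega>"
      unfolding Tb_def fst_conv snd_conv by (rule key[symmetric])
  qed
  have i1: "integrable ?P (\<lambda>\<omega>. (b/a) * ?X0 \<omega>)" using iX0 by simp
  have i2: "integrable ?P (\<lambda>\<omega>. (s/a) * ?xi \<omega>)" using ixi by simp
  have c1: "AE \<omega> in ?P. real_cond_exp ?P ?Fb ?g0 \<omega> = (b/a) * real_cond_exp ?P ?Fb ?X0 \<omega> - (s/a) * real_cond_exp ?P ?Fb ?xi \<omega>"
    using FB.real_cond_exp_diff[OF i1 i2] FB.real_cond_exp_cmult[OF iX0, of "b/a"] FB.real_cond_exp_cmult[OF ixi, of "s/a"]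
    unfolding g0eq[symmetric] by auto
  have c2: "AE \<omega> in ?P. real_cond_exp ?P ?Fb (real_cond_exp ?P ?G ?X0) \<omega> = real_cond_exp ?P ?Fb ?X0 \<omega>"
    by (rule FB.real_cond_exp_nested_subalg[OF subPG subGF iX0])
  have c3: "AE \<omega> in ?P. (real_cond_exp ?P ?Fb ?g0 \<omega>)\<^sup>2 = (b/a)\<^sup>2 * (real_cond_exp ?P ?Fb (real_cond_exp ?P ?G ?X0) \<omega>)\<^sup>2"
    using c1 c2 xi0 by eventually_elim (simp add: power_mult_distrib power_divide)
  have sqG: "integrable ?P (\<lambda>x. (real_cond_exp ?P ?G ?X0 x)\<^sup>2)"
    by (rule GG.cond_exp_sq(1)[OF iX0 iX02])
  have iY: "integrable ?P (real_cond_exp ?P ?G ?X0)" by (rule GG.real_cond_exp_int(1)[OF iX0])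
  have sqF: "(\<integral>x. (real_cond_exp ?P ?Fb (real_cond_exp ?P ?G ?X0) x)\<^sup>2 \<partial>?P) \<le> (\<integral>x. (real_cond_exp ?P ?G ?X0 x)\<^sup>2 \<partial>?P)"
    by (rule FB.cond_exp_sq(2)[OF iY sqG])
  have "(\<integral>\<omega>. (real_cond_exp ?P ?Fb ?g0 \<omega>)\<^sup>2 \<partial>?P) = (\<integral>\<omega>. (b/a)\<^sup>2 * (real_cond_exp ?P ?Fb (real_cond_exp ?P ?G ?X0) \<omega>)\<^sup>2 \<partial>?P)"
    by (rule integral_cong_AE) (use c3 in auto)
  also have "\<dots> = (b/a)\<^sup>2 * (\<integral>\<omega>. (real_cond_exp ?P ?Fb (real_cond_exp ?P ?G ?X0) \<omega>)\<^sup>2 \<partial>?P)"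
    by (rule integral_mult_right_zero)
  finally have QBe: "(\<integral>y. (?EK b y)\<^sup>2 \<partial>K) = (b/a)\<^sup>2 * (\<integral>\<omega>. (real_cond_exp ?P ?Fb (real_cond_exp ?P ?G ?X0) \<omega>)\<^sup>2 \<partial>?P)"
    using QB by simp
  have "(1/b\<^sup>2) * (\<integral>y. (?EK b y)\<^sup>2 \<partial>K) = (1/a\<^sup>2) * (\<integral>\<omega>. (real_cond_exp ?P ?Fb (real_cond_exp ?P ?G ?X0) \<omega>)\<^sup>2 \<partial>?P)"
    unfolding QBe using a b0 by (simp add: power_divide)
  also have "\<dots> \<le> (1/a\<^sup>2) * (\<integral>\<omega>. (real_cond_exp ?P ?G ?X0 \<omega>)\<^sup>2 \<partial>?P)"
    by (rule mult_left_mono[OF sqF]) simp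
  also have "\<dots> = (1/a\<^sup>2) * (\<integral>y. (?EK a y)\<^sup>2 \<partial>K)" using QA by simp
  finally show ?thesis .
qed



lemma step1:
  fixes M :: "'a measure" and Z0 Z1 :: "'a \<Rightarrow> real" and WU :: "'a \<Rightarrow> real \<times> real"
    and mu :: "(real \<times> real) measure" and h :: "real \<times> real \<Rightarrow> real" and w0 t :: real
  assumes pM: "prob_space M"
    and D0: "distributed M lborel Z0 std_normal_density"
    and D1: "distributed M lborel Z1 std_normal_density"
    and I1: "prob_space.indep_var M borel Z0 borel Z1"
    and WUm[measurable]: "WU \<in> borel_measurable M"
    and mu: "prob_space mu" and smu: "sets mu = sets borel"
    and dmu: "distr M borel WU = mu"
    and I2: "prob_space.indep_var M borel (\<lambda>x. (Z0 x, Z1 x)) borel WU"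
    and hm[measurable]: "h \<in> borel_measurable borel"
  shows "lemma12_fun M h Z0 Z1 WU w0 t = (1/t\<^sup>2) *
     (\<integral>y. (real_cond_exp ((SN \<Otimes>\<^sub>M SN) \<Otimes>\<^sub>M mu)
        (vimage_algebra (space ((SN \<Otimes>\<^sub>M SN) \<Otimes>\<^sub>M mu))
          (\<lambda>k. (h (t * fst (fst k) + sqrt (w0\<^sup>2 - t\<^sup>2) * snd (fst k), fst (snd k)), snd (snd k), snd (fst k))) borel)
        (\<lambda>k. fst (fst k)) y)\<^sup>2 \<partial>((SN \<Otimes>\<^sub>M SN) \<Otimes>\<^sub>M mu))"
proof -
  interpret mu: prob_space mu by fact
  interpret N: prob_space SN by (rule prob_N)
  interpret NN: pair_prob_space SN SN ..
  interpret KK0: pair_prob_space "SN \<Otimes>\<^sub>M SN" mu ..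
  let ?K = "(SN \<Otimes>\<^sub>M SN) \<Otimes>\<^sub>M mu"
  let ?v = "\<lambda>k::(real\<times>real)\<times>(real\<times>real). (h (t * fst (fst k) + sqrt (w0\<^sup>2 - t\<^sup>2) * snd (fst k), fst (snd k)), snd (snd k), snd (fst k))"
  let ?T = "\<lambda>x. ((Z0 x, Z1 x), WU x)"
  have [measurable_cong]: "sets mu = sets borel" by (rule smu)
  have Z0m[measurable]: "Z0 \<in> borel_measurable M"
    using distributed_measurable[OF D0] by (simp add: measurable_cong_sets[OF refl sets_lborel])
  have Z1m[measurable]: "Z1 \<in> borel_measurable M"
    using distributed_measurable[OF D1] by (simp add: measurable_cong_sets[OF refl sets_lborel])
  have Tm[measurable]: "?T \<in> measurable M ?K" by measurable
  have vm[measurable]: "?v \<in> measurable ?K borel" by measurable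
  have fKm[measurable]: "(\<lambda>k. fst (fst k)) \<in> borel_measurable ?K" by measurable
  have LM: "distr M ?K ?T = ?K" by (rule law_M[OF pM D0 D1 I1 WUm smu dmu I2])
  have iN1: "integrable SN (\<lambda>x::real. x)"
    using integrable_std_normal_distribution_moment[of 1] by simp
  have iNN1: "integrable (SN \<Otimes>\<^sub>M SN) (\<lambda>z. fst z)"
    by (rule integrable_pair_fst[OF N.sigma_finite_measure_axioms prob_N _ iN1]) simp
  have iK1: "integrable ?K (\<lambda>k. fst (fst k))"
    by (rule integrable_pair_fst[OF NN.sigma_finite_measure_axioms mu _ iNN1]) simp
  have "(\<integral>x. (real_cond_exp M (vimage_algebra (space M) (\<lambda>x. ?v (?T x)) borel) (\<lambda>x. fst (fst (?T x))) x)\<^sup>2 \<partial>M)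
      = (\<integral>y. (real_cond_exp (distr M ?K ?T) (vimage_algebra (space ?K) ?v borel) (\<lambda>k. fst (fst k)) y)\<^sup>2 \<partial>distr M ?K ?T)"
    by (rule cond_exp_transfer_sq[OF pM Tm fKm _ vm]) (simp add: LM iK1)
  then have E: "(\<integral>x. (real_cond_exp M (vimage_algebra (space M) (\<lambda>x. ?v (?T x)) borel) (\<lambda>x. fst (fst (?T x))) x)\<^sup>2 \<partial>M)
      = (\<integral>y. (real_cond_exp ?K (vimage_algebra (space ?K) ?v borel) (\<lambda>k. fst (fst k)) y)\<^sup>2 \<partial>?K)"
    by (simp only: LM)
  have e1: "(\<lambda>x. ?v (?T x)) = (\<lambda>x. (h (t * Z0 x + sqrt (w0\<^sup>2 - t\<^sup>2) * Z1 x, fst (WU x)), snd (WU x), Z1 x))"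
    by simp
  have e2: "(\<lambda>x. fst (fst (?T x))) = Z0" by simp
  show ?thesis
    unfolding lemma12_fun_def cond_sigma_def E[unfolded e1 e2, symmetric] ..
qed

theorem lemma12:
  fixes M :: "'a measure" and Z0 Z1 :: "'a \<Rightarrow> real" and WU :: "'a \<Rightarrow> real \<times> real"
    and mu :: "(real \<times> real) measure" and h :: "real \<times> real \<Rightarrow> real" and w0 :: real
  assumes "prob_space M"
    and "distributed M lborel Z0 std_normal_density"
    and "distributed M lborel Z1 std_normal_density"
    and "prob_space.indep_var M borel Z0 borel Z1"
    and "WU \<in> borel_measurable M"
    and "prob_space mu" and "sets mu = sets borel"
    and "distr M borel WU = mu"
    and "prob_space.indep_var M borel (\<lambda>x. (Z0 x, Z1 x)) borel WU"
    and "continuous_on UNIV h"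
    and "w0 > 0"
  shows "\<forall>a b. 0 < a \<longrightarrow> a \<le> b \<longrightarrow> b \<le> w0 \<longrightarrow>
           lemma12_fun M h Z0 Z1 WU w0 b \<le> lemma12_fun M h Z0 Z1 WU w0 a"
proof (intro allI impI)
  fix a b :: real
  assume a: "0 < a" and ab: "a \<le> b" and bw: "b \<le> w0"
  have hm: "h \<in> borel_measurable borel" by (rule borel_measurable_continuous_onI) fact
  note S = step1[OF assms(1-9) hm]
  show "lemma12_fun M h Z0 Z1 WU w0 b \<le> lemma12_fun M h Z0 Z1 WU w0 a"
  proof (cases "a = b")
    case True then show ?thesis by simp
  next
    case False
    then have ab': "a < b" using ab by simp
    show ?thesis
      apply (subst (1 2) S)
      by (rule key_P[OF assms(6) assms(7) hm a ab' bw])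
  qed
qed


end
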